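(* Fix an integer $n\geq 3$ and let $\mathcal E/\mathbb{Q}$ be an elliptic curve without complex multiplication. For each prime $p$ of good reduction, let $E/\mathbb{F}_p$ be the reduction of $\mathcal E$ modulo $p$ and set $$\Delta''_{E/\mathbb{F}_p;n}:=\frac{a_{E/\mathbb{F}_p;n}-\big((5-n)+(n-1)a_{E/\mathbb{F}_p}-(n-1)p\big)}{-6/\sqrt p}.$$ Define $\Theta''_{E/\mathbb{F}_p;n}\in[0,\pi]$ by $\cos\Theta''_{E/\mathbb{F}_p;n}=\Delta''_{E/\mathbb{F}_p;n}$ whenever $|\Delta''_{E/\mathbb{F}_p;n}|\leq 1$. Then for all real $0\leq\alpha<\beta\leq\pi$, $$\lim_{N\to\infty}\frac{\#\{p\leq N:\ p \text{ prime of good reduction},\ |\Delta''_{E/\mathbb{F}_p;n}|\le 1,\ \alpha\leq\Theta''_{E/\mathbb{F}_p;n}\leq\beta\}}{\#\{p\leq N:\ p\text{ prime}\}}=\frac{2}{\pi}\int_\alpha^\beta\sin^2\theta\,d\theta.$$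
   Context: For an elliptic curve $E$ over $\mathbb{F}_q$: $a_{E/\mathbb{F}_q}:=q+1-\#E(\mathbb{F}_q)$. For $m\geq 1$, $\beta_{E/\mathbb{F}_q;m}(0):=\sum_{\mathcal V}\frac{1}{\#\mathrm{Aut}(\mathcal V)}$ with $\mathcal V$ running over isomorphism classes of semi-stable vector bundles of rank $m$ and degree $0$ on $E$, and $\beta_{E/\mathbb{F}_q;0}(0):=1$. The rank $n$ $a$-invariant is $a_{E/\mathbb{F}_q;n}:=(q^n+1)-(q^n-1)\frac{\beta_{E/\mathbb{F}_q;n}(0)}{\beta_{E/\mathbb{F}_q;n-1}(0)}$. Known background (Weng–Zagier): $(q^m-1)\beta_{E/\mathbb{F}_q;m}(0)=(q^m+q^{m-1}-a_{E/\mathbb{F}_q})\beta_{E/\mathbb{F}_q;m-1}(0)-(q^{m-1}-q)\beta_{E/\mathbb{F}_q;m-2}(0)$ for $m\ge1$ with $\beta_{E/\mathbb{F}_q;-1}(0):=0$. The classical Sato–Tate law (Taylor et al.) for non-CM $\mathcal E/\mathbb{Q}$ may be used: the angles $\theta_p\in[0,\pi]$ with $\cos\theta_p=a_{E/\mathbb{F}_p}/(2\sqrt p)$ are equidistributed with respect to $\frac{2}{\pi}\sin^2\theta\,d\theta$. *)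

theory Defs
  imports "HOL-Analysis.Analysis" "HOL-Computational_Algebra.Primes"
begin

text \<open>An elliptic curve over Q is given by an integral (long) Weierstrass model
  y^2 + a1 x y + a3 y = x^3 + a2 x^2 + a4 x + a6, coefficients (a1,a2,a3,a4,a6),
  with nonzero discriminant.  Every elliptic curve over Q has such a model.\<close>

type_synonym wmodel = "int \<times> int \<times> int \<times> int \<times> int"

definition wdisc :: "wmodel \<Rightarrow> int" where
  "wdisc W = (case W of (a1, a2, a3, a4, a6) \<Rightarrow>
     (let b2 = a1^2 + 4*a2; b4 = 2*a4 + a1*a3; b6 = a3^2 + 4*a6;
          b8 = a1^2*a6 + 4*a2*a6 - a1*a3*a4 + a2*a3^2 - a4^2
      in (- (b2^2*b8)) - 8*b4^3 - 27*b6^2 + 9*b2*b4*b6))"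

text \<open>Two integral Weierstrass models define Q-isomorphic curves iff they are related by
  a change of variables x = u^2 x' + r, y = u^3 y' + s u^2 x' + t with u,r,s,t rational,
  u nonzero (Silverman, Table 3.1).\<close>

fun wiso :: "wmodel \<Rightarrow> wmodel \<Rightarrow> bool" where
  "wiso (a1, a2, a3, a4, a6) (b1, b2, b3, b4, b6) =
     (\<exists>u r sv t :: rat. u \<noteq> 0 \<and>
        (u  *  of_int b1 = of_int a1 + 2 * sv) \<and>
        (u^2  *  of_int b2 = of_int a2 - sv  *  of_int a1 + 3 * r - sv^2) \<and>
        (u^3  *  of_int b3 = of_int a3 + r  *  of_int a1 + 2 * t) \<and>
        (u^4  *  of_int b4 = of_int a4 - sv  *  of_int a3 + 2 * r  *  of_int a2 - (t + r * sv)  *  of_int a1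
                          + 3 * r^2 - 2 * sv * t) \<and>
        (u^6  *  of_int b6 = of_int a6 + r  *  of_int a4 + r^2  *  of_int a2 + r^3 - t  *  of_int a3
                          - t^2 - r * t  *  of_int a1))"

definition good_model :: "wmodel \<Rightarrow> nat \<Rightarrow> wmodel \<Rightarrow> bool" where
  "good_model W p W' \<longleftrightarrow> wiso W W' \<and> \<not> (int p dvd wdisc W')"

definition good_red :: "wmodel \<Rightarrow> nat \<Rightarrow> bool" where
  "good_red W p \<longleftrightarrow> prime p \<and> (\<exists>W'. good_model W p W')"

definition npoints :: "wmodel \<Rightarrow> nat \<Rightarrow> nat" where
  "npoints W p = (case W of (a1, a2, a3, a4, a6) \<Rightarrow>
     1 + card {(x, y). x < p \<and> y < p \<and>
        (int y^2 + a1 * int x * int y + a3 * int y) mod int p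
          = (int x^3 + a2 * int x^2 + a4 * int x + a6) mod int p})"

definition frob_trace :: "wmodel \<Rightarrow> nat \<Rightarrow> int" where
  "frob_trace W p = int p + 1 - int (npoints (SOME W'. good_model W p W') p)"

text \<open>beta_{E/F_q;m}(0), computed from the Weng--Zagier recursion (depends only on q and a).\<close>

fun wz_beta :: "real \<Rightarrow> real \<Rightarrow> nat \<Rightarrow> real" where
  "wz_beta q a 0 = 1"
| "wz_beta q a (Suc 0) = (q + 1 - a) / (q - 1)"
| "wz_beta q a (Suc (Suc m)) =
     ((q^(m+2) + q^(m+1) - a) * wz_beta q a (Suc m) - (q^(m+1) - q) * wz_beta q a m)
       / (q^(m+2) - 1)"

definition a_inv :: "real \<Rightarrow> real \<Rightarrow> nat \<Rightarrow> real" where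
  "a_inv q a n = (q^n + 1) - (q^n - 1) * wz_beta q a n / wz_beta q a (n - 1)"

definition Delta2 :: "wmodel \<Rightarrow> nat \<Rightarrow> nat \<Rightarrow> real" where
  "Delta2 W n p = (let a = real_of_int (frob_trace W p) in
     (a_inv (real p) a n - ((5 - real n) + (real n - 1) * a - (real n - 1) * real p))
       / (- 6 / sqrt (real p)))"

definition sato_tate :: "wmodel \<Rightarrow> bool" where
  "sato_tate W \<longleftrightarrow> (\<forall>\<alpha> \<beta>. 0 \<le> \<alpha> \<and> \<alpha> < \<beta> \<and> \<beta> \<le> pi \<longrightarrow>
     ((\<lambda>N. real (card {p. p \<le> N \<and> good_red W p \<and>
              \<bar>real_of_int (frob_trace W p)\<bar> \<le> 2 * sqrt (real p) \<and>
              \<alpha> \<le> arccos (real_of_int (frob_trace W p) / (2 * sqrt (real p))) \<and>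
              arccos (real_of_int (frob_trace W p) / (2 * sqrt (real p))) \<le> \<beta>})
           / real (card {p. p \<le> N \<and> prime p}))
      \<longlonglongrightarrow> 2 / pi * integral {\<alpha>..\<beta>} (\<lambda>\<theta>. sin \<theta> ^ 2)))"

end

theory Submission
  imports Defs
begin

lemma a_inv_1: assumes "q > 1" shows "a_inv q a 1 = a"
  using assms by (simp add: a_inv_def field_simps)

lemma a_inv_rec:
  assumes q: "q > 1" and b0: "wz_beta q a k \<noteq> 0" and b1: "wz_beta q a (Suc k) \<noteq> 0"
  defines "b \<equiv> a_inv q a (Suc k)"
  shows "a_inv q a (Suc (Suc k)) = b + a - 1 - q + (b - 1 - q) * (b - 2) / (q ^ Suc k + 1 - b)"
proof -
  define Q where "Q = q ^ Suc k"
  define x where "x = wz_beta q a k"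
  define y where "y = wz_beta q a (Suc k)"
  have Q1: "Q > 1" unfolding Q_def using q by (intro one_less_power) auto
  have qQ: "q * Q > 1" using Q1 q by (metis less_1_mult)
  have x0: "x \<noteq> 0" and y0: "y \<noteq> 0" using b0 b1 by (auto simp: x_def y_def)
  have bb: "b = Q + 1 - (Q - 1) * y / x" unfolding b_def a_inv_def Q_def x_def y_def by simp
  have Qb: "Q + 1 - b = (Q - 1) * y / x" using bb by simp
  have b2: "wz_beta q a (Suc (Suc k)) = ((q*Q + Q - a) * y - (Q - q) * x) / (q*Q - 1)"
    by (simp add: Q_def x_def y_def algebra_simps)
  have qq: "q ^ Suc (Suc k) = q * Q" by (simp add: Q_def)
  have l0: "a_inv q a (Suc (Suc k)) = q*Q + 1 - (q*Q - 1) * wz_beta q a (Suc (Suc k)) / y"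
    unfolding a_inv_def qq y_def by simp
  have lhs: "a_inv q a (Suc (Suc k)) = 1 - Q + a + (Q - q) * x / y"
    unfolding l0 b2 using qQ y0 by (simp add: field_simps)
  have "b + a - 1 - q + (b - 1 - q) * (b - 2) / (Q + 1 - b) = 1 - Q + a + (Q - q) * x / y"
    unfolding Qb unfolding bb using x0 y0 Q1
    by (simp add: field_simps)
  then show ?thesis using lhs by (simp add: Q_def)
qed

definition Lm :: "nat \<Rightarrow> real \<Rightarrow> real \<Rightarrow> real" where
  "Lm m q a = (5 - real m) + (real m - 1) * a - (real m - 1) * q - 3 * a / q"

lemma a_small:
  assumes q: "q \<ge> 16" and a: "\<bar>a\<bar> \<le> 2 * sqrt q"
  shows "\<bar>a\<bar> \<le> q / 2" "a^2 \<le> 4 * q"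
proof -
  have s4: "sqrt q \<ge> 4" using q real_sqrt_le_mono[of 16 q] by simp
  have sq: "sqrt q * sqrt q = q" using q by simp
  have "4 * sqrt q \<le> sqrt q * sqrt q" using s4 q by (intro mult_right_mono) auto
  then show "\<bar>a\<bar> \<le> q / 2" using a sq by linarith
  have "\<bar>a\<bar>^2 \<le> (2 * sqrt q)^2" using a by (intro power_mono) auto
  then show "a^2 \<le> 4 * q" using q by (simp add: power_mult_distrib)
qed

lemma beta_nz:
  assumes "q > 1" "wz_beta q a k \<noteq> 0" "a_inv q a (Suc k) \<noteq> q ^ Suc k + 1"
  shows "wz_beta q a (Suc k) \<noteq> 0"
  using assms by (auto simp: a_inv_def)

lemma nz_bound:
  assumes m: "m \<ge> 1" and q: "q \<ge> 16" and a: "\<bar>a\<bar> \<le> 2 * sqrt q"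
    and e: "\<bar>a_inv q a m - Lm m q a\<bar> \<le> K / q" and K: "K \<le> q"
  shows "a_inv q a m \<noteq> q ^ m + 1"
proof -
  have aq: "\<bar>a\<bar> \<le> q / 2" using a_small[OF q a] by simp
  have "(real m - 1) * (a - q) \<le> 0" using m aq by (intro mult_nonneg_nonpos) auto
  moreover have "\<bar>3 * a / q\<bar> \<le> 3/2" using aq q by (simp add: abs_mult field_simps)
  moreover have "Lm m q a = (5 - real m) + (real m - 1) * (a - q) - 3 * a / q"
    unfolding Lm_def by (simp add: algebra_simps)
  moreover have "5 - real m \<le> 4" using m by simp
  ultimately have L: "Lm m q a \<le> 6" by linarith
  have "K / q \<le> 1" using K q by simp
  then have "a_inv q a m \<le> 7" using e L by linarith
  moreover have "q \<le> q ^ m" using q m by (simp add: self_le_power)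
  ultimately show ?thesis using q by linarith
qed

lemma base3:
  assumes q: "q \<ge> 16" and a: "\<bar>a\<bar> \<le> 2 * sqrt q"
  shows "(\<forall>j\<le>3. wz_beta q a j \<noteq> 0) \<and> \<bar>a_inv q a 3 - Lm 3 q a\<bar> \<le> 7 / q"
proof -
  have aq: "\<bar>a\<bar> \<le> q / 2" and a2: "a^2 \<le> 4 * q" using a_small[OF q a] by auto
  have q1: "q > 1" using q by simp
  have B0: "wz_beta q a 0 \<noteq> 0" by simp
  have qa: "q + 1 - a > 0" using aq q by linarith
  have B1: "wz_beta q a (Suc 0) \<noteq> 0" using qa q1 by simp
  have A1: "a_inv q a (Suc 0) = a" using a_inv_1[OF q1] by simp
  have A2: "a_inv q a (Suc (Suc 0)) = a + 1 - q"
  proof -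
    have "a_inv q a (Suc (Suc 0)) = a + a - 1 - q + (a - 1 - q) * (a - 2) / (q + 1 - a)"
      using a_inv_rec[OF q1 B0 B1] A1 by simp
    also have "(a - 1 - q) * (a - 2) / (q + 1 - a) = 2 - a" using qa by (simp add: field_simps)
    finally show ?thesis by simp
  qed
  have B2: "wz_beta q a (Suc (Suc 0)) \<noteq> 0"
  proof (rule beta_nz[OF q1 B1])
    have "q ^ 2 \<ge> 0" by simp
    then have "a + 1 - q < q ^ 2 + 1" using aq q by linarith
    then show "a_inv q a (Suc (Suc 0)) \<noteq> q ^ Suc (Suc 0) + 1" using A2 by (simp add: power2_eq_square)
  qed
  have A3: "a_inv q a 3 = (a + 1 - q) + a - 1 - q + (a - 2 * q) * (a - 1 - q) / (q^2 + q - a)"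
  proof -
    have "a_inv q a (Suc (Suc (Suc 0))) = (a + 1 - q) + a - 1 - q
       + ((a + 1 - q) - 1 - q) * ((a + 1 - q) - 2) / (q ^ Suc (Suc 0) + 1 - (a + 1 - q))"
      using a_inv_rec[OF q1 B1 B2] A2 by simp
    then show ?thesis by (simp add: numeral_3_eq_3 algebra_simps power2_eq_square)
  qed
  have den: "q^2 + q - a \<ge> q^2" using aq q by linarith
  have den2: "q * (q^2 + q - a) \<ge> q^3"
    using den q by (metis mult_left_mono power2_eq_square power3_eq_cube mult.assoc less_eq_real_def
      dual_order.trans zero_le_numeral)
  have E: "a_inv q a 3 - Lm 3 q a = (4*a*q + a^2*q - 3*a^2) / (q * (q^2 + q - a))"
  proof -
    have "q^2 > 0" using q by simp
    then have d1: "q^2 + q - a \<noteq> 0" "q \<noteq> 0" using den q by auto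
    show ?thesis unfolding A3 Lm_def using d1
      by (simp add: divide_simps) (simp add: algebra_simps power2_eq_square)
  qed
  have num: "\<bar>4*a*q + a^2*q - 3*a^2\<bar> \<le> 7 * q^2"
  proof -
    have h1: "\<bar>4*a*q\<bar> \<le> 2 * q^2" using aq q by (simp add: abs_mult power2_eq_square)
    moreover have "a^2*q \<le> 4 * q^2" using a2 q by (simp add: power2_eq_square mult_right_mono)
    moreover have "3 * a^2 \<le> q^2"
    proof -
      have "16 * q \<le> q * q" using q mult_right_mono[of 16 q q] by simp
      then show ?thesis using a2 q unfolding power2_eq_square by linarith
    qed
    moreover have "a^2 \<ge> 0" "a^2 * q \<ge> 0" using q by auto
    ultimately show ?thesis using h1 unfolding abs_le_iff by linarith
  qed
  have "\<bar>a_inv q a 3 - Lm 3 q a\<bar> \<le> 7 * q^2 / q^3"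
    unfolding E abs_divide using num den2 q
    by (intro frac_le) auto
  also have "7 * q^2 / q^3 = 7 / q" using q by (simp add: power2_eq_square power3_eq_cube)
  finally have bnd: "\<bar>a_inv q a 3 - Lm 3 q a\<bar> \<le> 7 / q" .
  have B3: "wz_beta q a 3 \<noteq> 0"
  proof -
    have "a_inv q a 3 \<noteq> q ^ 3 + 1" using nz_bound[OF _ q a bnd] q by simp
    then show ?thesis using beta_nz[OF q1 B2] by (simp add: numeral_3_eq_3)
  qed
  have "\<forall>j\<le>3. wz_beta q a j \<noteq> 0"
  proof (intro allI impI)
    fix j :: nat assume "j \<le> 3"
    then have "j = 0 \<or> j = Suc 0 \<or> j = Suc (Suc 0) \<or> j = 3" by linarith
    then show "wz_beta q a j \<noteq> 0" using B0 B1 B2 B3 by auto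
  qed
  then show ?thesis using bnd by simp
qed

lemma step_bound:
  fixes q a b B :: real
  assumes q: "q \<ge> 1" and m: "m \<ge> 3" and B: "B \<ge> 0" and qB: "q \<ge> 2 * B"
    and b: "\<bar>b\<bar> \<le> B * q"
  shows "\<bar>(b - 1 - q) * (b - 2) / (q ^ m + 1 - b)\<bar> \<le> 2 * (B + 2)^2 / q"
proof -
  have n1: "\<bar>b - 1 - q\<bar> \<le> (B + 2) * q" using b q by (simp add: abs_le_iff algebra_simps, linarith?)
  have n2: "\<bar>b - 2\<bar> \<le> (B + 2) * q" using b q by (simp add: abs_le_iff algebra_simps, linarith?)
  have num: "\<bar>(b - 1 - q) * (b - 2)\<bar> \<le> ((B + 2) * q) * ((B + 2) * q)"
    unfolding abs_mult using n1 n2 by (intro mult_mono) auto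
  have "q ^ 3 \<le> q ^ m" using q m by (intro power_increasing) auto
  moreover have "2 * B * q \<le> q * q" using qB q by (intro mult_right_mono) auto
  moreover have "q ^ 3 = q * q * q" by (simp add: power3_eq_cube)
  moreover have "2 * B * q \<le> q * q * q / 2 * 2 / q" using \<open>2 * B * q \<le> q * q\<close> q by simp
  moreover have "q * q * q / 2 \<ge> B * q"
  proof -
    have "q * q * q \<ge> q * q" using q mult_left_mono[of 1 q "q*q"] by simp
    then show ?thesis using \<open>2 * B * q \<le> q * q\<close> by linarith
  qed
  ultimately have den: "q ^ m + 1 - b \<ge> q * q * q / 2" using b by linarith
  have qpos: "q * q * q / 2 > 0" using q by simp
  have "\<bar>(b - 1 - q) * (b - 2) / (q ^ m + 1 - b)\<bar> \<le> ((B + 2) * q) * ((B + 2) * q) / (q * q * q / 2)"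
    unfolding abs_divide using num den qpos
    by (intro frac_le) auto
  also have "\<dots> = 2 * (B + 2)^2 / q" using q by (simp add: field_simps power2_eq_square)
  finally show ?thesis .
qed

lemma main_bound:
  assumes m: "m \<ge> 3"
  shows "\<exists>K Q. K \<ge> 0 \<and> Q \<ge> 16 \<and> (\<forall>q a. Q \<le> q \<and> \<bar>a\<bar> \<le> 2 * sqrt q \<longrightarrow>
           (\<forall>j\<le>m. wz_beta q a j \<noteq> 0) \<and> \<bar>a_inv q a m - Lm m q a\<bar> \<le> K / q)"
  using m
proof (induction m rule: nat_induct_at_least)
  case base
  show ?case using base3 by (intro exI[of _ 7] exI[of _ 16]) auto
next
  case (Suc m)
  from Suc.IH obtain K Q where K: "K \<ge> 0" and Q: "Q \<ge> 16" and
    H: "\<And>q a. Q \<le> q \<Longrightarrow> \<bar>a\<bar> \<le> 2 * sqrt q \<Longrightarrow>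
           (\<forall>j\<le>m. wz_beta q a j \<noteq> 0) \<and> \<bar>a_inv q a m - Lm m q a\<bar> \<le> K / q" by blast
  define B where "B = 3 * real m + 8 + K"
  define K' where "K' = K + 2 * (B + 2)^2"
  define Q' where "Q' = max Q (max (2 * B) K')"
  have B0: "B \<ge> 0" using K by (simp add: B_def)
  have K'0: "K' \<ge> 0" using K by (simp add: K'_def)
  have "\<forall>q a. Q' \<le> q \<and> \<bar>a\<bar> \<le> 2 * sqrt q \<longrightarrow>
           (\<forall>j\<le>Suc m. wz_beta q a j \<noteq> 0) \<and> \<bar>a_inv q a (Suc m) - Lm (Suc m) q a\<bar> \<le> K' / q"
  proof (intro allI impI, elim conjE)
    fix q a :: real
    assume qQ: "Q' \<le> q" and a: "\<bar>a\<bar> \<le> 2 * sqrt q"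
    have q16: "q \<ge> 16" using qQ Q by (simp add: Q'_def)
    have q1: "q > 1" using q16 by simp
    have qB: "q \<ge> 2 * B" and qK: "q \<ge> K'" using qQ by (auto simp: Q'_def)
    from H[of q a] qQ a have nz: "\<forall>j\<le>m. wz_beta q a j \<noteq> 0"
      and e: "\<bar>a_inv q a m - Lm m q a\<bar> \<le> K / q" by (auto simp: Q'_def)
    have aq: "\<bar>a\<bar> \<le> q / 2" using a_small[OF q16 a] by simp
    obtain k where mk: "m = Suc k" using Suc.hyps by (cases m) auto
    define b where "b = a_inv q a m"
    have rec: "a_inv q a (Suc m) = b + a - 1 - q + (b - 1 - q) * (b - 2) / (q ^ m + 1 - b)"
      unfolding b_def mk using nz mk by (intro a_inv_rec q1) auto
    have Lrec: "Lm (Suc m) q a = Lm m q a + a - 1 - q" unfolding Lm_def by (simp add: algebra_simps)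
    have bB: "\<bar>b\<bar> \<le> B * q"
    proof -
      have "\<bar>Lm m q a\<bar> \<le> (real m + 5) + real m * q + real m * q + 3/2"
      proof -
        have f1: "\<bar>5 - real m\<bar> \<le> real m + 5" by simp
        have f2: "\<bar>(real m - 1) * a\<bar> \<le> real m * q"
          unfolding abs_mult using aq Suc.hyps q16 by (intro mult_mono) auto
        have f3: "\<bar>(real m - 1) * q\<bar> \<le> real m * q"
          unfolding abs_mult using Suc.hyps q16 by (intro mult_mono) auto
        have f4: "\<bar>3 * a / q\<bar> \<le> 3/2" using aq q16 by (simp add: abs_mult field_simps)
        show ?thesis using f1 f2 f3 f4 unfolding Lm_def abs_le_iff by linarith
      qed
      moreover have "K / q \<le> K" using K q16 mult_left_mono[of 1 q K] by (simp add: field_simps)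
      moreover have "real m + 7 + K \<le> (real m + 8 + K) * q"
      proof -
        have "(real m + 8 + K) * 1 \<le> (real m + 8 + K) * q" using q16 K by (intro mult_left_mono) auto
        then have "real m + 8 + K \<le> (real m + 8 + K) * q" by (simp only: mult_1_right)
        then show ?thesis by linarith
      qed
      ultimately show ?thesis using e unfolding b_def B_def by (simp add: abs_le_iff algebra_simps, linarith?)
    qed
    have E: "\<bar>(b - 1 - q) * (b - 2) / (q ^ m + 1 - b)\<bar> \<le> 2 * (B + 2)^2 / q"
      using step_bound[of q m B b] q16 Suc.hyps B0 qB bB by simp
    have bnd: "\<bar>a_inv q a (Suc m) - Lm (Suc m) q a\<bar> \<le> K' / q"
    proof -
      have eq1: "a_inv q a (Suc m) - Lm (Suc m) q a = (b - Lm m q a) + (b - 1 - q) * (b - 2) / (q ^ m + 1 - b)"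
        using rec Lrec by simp
      have eq2: "K' / q = K / q + 2 * (B + 2)^2 / q" by (simp add: K'_def add_divide_distrib)
      show ?thesis unfolding eq1 eq2
        using order_trans[OF abs_triangle_ineq add_mono[OF e[folded b_def] E]] .
    qed
    have "a_inv q a (Suc m) \<noteq> q ^ Suc m + 1" using nz_bound[OF _ q16 a bnd qK] by simp
    then have "wz_beta q a (Suc m) \<noteq> 0" using beta_nz[OF q1, of a m] nz by auto
    then have "\<forall>j\<le>Suc m. wz_beta q a j \<noteq> 0" using nz by (auto simp: le_Suc_eq)
    then show "(\<forall>j\<le>Suc m. wz_beta q a j \<noteq> 0) \<and> \<bar>a_inv q a (Suc m) - Lm (Suc m) q a\<bar> \<le> K' / q"
      using bnd by simp
  qed
  moreover have "Q' \<ge> 16" using Q by (simp add: Q'_def)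
  ultimately show ?case using K'0 by blast
qed

lemma delta_close:
  assumes n: "n \<ge> 3"
  shows "\<exists>C P. C \<ge> 0 \<and> P \<ge> 16 \<and> (\<forall>p. P \<le> real p \<and> \<bar>real_of_int (frob_trace W p)\<bar> \<le> 2 * sqrt (real p) \<longrightarrow>
     \<bar>Delta2 W n p - real_of_int (frob_trace W p) / (2 * sqrt (real p))\<bar> \<le> C / sqrt (real p))"
proof -
  obtain K Q where K: "K \<ge> 0" and Q: "Q \<ge> 16" and
    H: "\<And>q a. Q \<le> q \<Longrightarrow> \<bar>a\<bar> \<le> 2 * sqrt q \<Longrightarrow> \<bar>a_inv q a n - Lm n q a\<bar> \<le> K / q"
    using main_bound[OF n] by blast
  have "\<forall>p. Q \<le> real p \<and> \<bar>real_of_int (frob_trace W p)\<bar> \<le> 2 * sqrt (real p) \<longrightarrow>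
     \<bar>Delta2 W n p - real_of_int (frob_trace W p) / (2 * sqrt (real p))\<bar> \<le> (K / 6) / sqrt (real p)"
  proof (intro allI impI, elim conjE)
    fix p assume qQ: "Q \<le> real p" and a: "\<bar>real_of_int (frob_trace W p)\<bar> \<le> 2 * sqrt (real p)"
    define q where "q = real p"
    define a where "a = real_of_int (frob_trace W p)"
    define e where "e = a_inv q a n - Lm n q a"
    have q16: "q \<ge> 16" using qQ Q by (simp add: q_def)
    have e: "\<bar>e\<bar> \<le> K / q" using H[of q a] qQ a by (simp add: e_def q_def a_def)
    have sq: "sqrt q * sqrt q = q" using q16 by simp
    have s0: "sqrt q > 0" using q16 by simp
    have D: "Delta2 W n p = (a_inv q a n - ((5 - real n) + (real n - 1) * a - (real n - 1) * q)) / (- 6 / sqrt q)"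
      unfolding Delta2_def q_def a_def Let_def by simp
    have "Delta2 W n p - a / (2 * sqrt q) = - e * sqrt q / 6"
      unfolding D e_def Lm_def using s0 sq q16
      by (simp add: field_simps)
    then have "\<bar>Delta2 W n p - a / (2 * sqrt q)\<bar> = \<bar>e\<bar> * sqrt q / 6" using s0 by (simp add: abs_mult)
    also have "\<dots> \<le> (K / q) * sqrt q / 6" using e s0 by (intro divide_right_mono mult_right_mono) auto
    also have "(K / q) * sqrt q / 6 = (K / 6) / sqrt q" using sq s0 by (simp add: field_simps)
    finally show "\<bar>Delta2 W n p - real_of_int (frob_trace W p) / (2 * sqrt (real p))\<bar> \<le> (K / 6) / sqrt (real p)"
      by (simp add: q_def a_def)
  qed
  then show ?thesis using K Q by (intro exI[of _ "K/6"] exI[of _ Q]) auto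
qed

definition Fs :: "real \<Rightarrow> real" where "Fs t = t / 2 - sin (2 * t) / 4"

lemma integral_sin2:
  assumes "x \<le> y"
  shows "integral {x..y} (\<lambda>\<theta>. sin \<theta> ^ 2) = Fs y - Fs x"
proof -
  have "((\<lambda>\<theta>. sin \<theta> ^ 2) has_integral (Fs y - Fs x)) {x..y}"
  proof (rule fundamental_theorem_of_calculus[OF assms])
    fix t assume "t \<in> {x..y}"
    have "(Fs has_real_derivative (1/2 - cos (2 * t) * 2 / 4)) (at t)"
      unfolding Fs_def by (auto intro!: derivative_eq_intros)
    moreover have "1/2 - cos (2 * t) * 2 / 4 = sin t ^ 2"
      using cos_double_sin[of t] by (simp add: field_simps)
    ultimately have "(Fs has_real_derivative (sin t ^ 2)) (at t within {x..y})"
      by (simp add: has_field_derivative_at_within)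
    then show "(Fs has_vector_derivative (sin t ^ 2)) (at t within {x..y})"
      by (simp add: has_real_derivative_iff_has_vector_derivative)
  qed
  then show ?thesis by (rule integral_unique)
qed

definition hcl :: "real \<Rightarrow> real" where "hcl x = arccos (max (-1) (min 1 x))"

lemma isCont_hcl: "isCont hcl x"
proof -
  have "continuous_on UNIV (\<lambda>x::real. max (-1) (min 1 x))" by (intro continuous_intros)
  moreover have "(\<lambda>x::real. max (-1) (min 1 x)) ` UNIV \<subseteq> {-1..1}" by auto
  ultimately have "continuous_on UNIV hcl" unfolding hcl_def
    using continuous_on_compose2[OF continuous_on_arccos'] by blast
  then show ?thesis by (simp add: continuous_on_eq_continuous_at)
qed

lemma prime_count_inf: "filterlim (\<lambda>N. real (card {p. p \<le> N \<and> prime (p::nat)})) at_top sequentially"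
  unfolding filterlim_at_top
proof
  fix Z :: real
  obtain B where B: "finite B" "card B = nat \<lceil>Z\<rceil>" "B \<subseteq> {p::nat. prime p}"
    using infinite_arbitrarily_large[OF primes_infinite] by blast
  have "eventually (\<lambda>N. B \<subseteq> {p. p \<le> N \<and> prime p}) sequentially"
    unfolding eventually_sequentially
  proof (intro exI[of _ "Max (insert 0 B)"] allI impI)
    fix N assume "Max (insert 0 B) \<le> N"
    then have "\<forall>b\<in>B. b \<le> N" using B(1) by (meson Max_ge finite_insert insertCI le_trans)
    then show "B \<subseteq> {p. p \<le> N \<and> prime p}" using B(3) by auto
  qed
  then show "eventually (\<lambda>N. Z \<le> real (card {p. p \<le> N \<and> prime (p::nat)})) sequentially"
  proof (rule eventually_mono)
    fix N assume "B \<subseteq> {p. p \<le> N \<and> prime p}"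
    then have "card B \<le> card {p. p \<le> N \<and> prime p}" by (rule card_mono[rotated]) auto
    then show "Z \<le> real (card {p. p \<le> N \<and> prime (p::nat)})" using B(2)
      by (metis of_nat_le_iff real_nat_ceiling_ge order_trans)
  qed
qed

lemma hcl_range: "0 \<le> hcl x" "hcl x \<le> pi"
  unfolding hcl_def by (auto intro!: arccos_lbound arccos_ubound)

lemma hcl_anti: "x \<le> y \<Longrightarrow> hcl y \<le> hcl x"
  unfolding hcl_def by (rule arccos_le_arccos) auto

lemma hcl_eq: "-1 \<le> x \<Longrightarrow> x \<le> 1 \<Longrightarrow> hcl x = arccos x"
  unfolding hcl_def by simp

lemma le_cos_of_le_arccos:
  assumes "\<bar>g\<bar> \<le> 1" "0 \<le> t" "t \<le> pi" "t \<le> arccos g"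
  shows "g \<le> cos t"
proof -
  have "cos (arccos g) \<le> cos t"
    using assms by (subst cos_mono_le_eq) (auto intro!: arccos_lbound arccos_ubound)
  then show ?thesis using assms by simp
qed

lemma cos_le_of_arccos_le:
  assumes "\<bar>g\<bar> \<le> 1" "0 \<le> t" "t \<le> pi" "arccos g \<le> t"
  shows "cos t \<le> g"
proof -
  have "cos t \<le> cos (arccos g)"
    using assms by (subst cos_mono_le_eq) (auto intro!: arccos_lbound arccos_ubound)
  then show ?thesis using assms by simp
qed

lemma upper_pt:
  assumes d: "\<bar>g - f\<bar> \<le> \<delta>" and f: "\<bar>f\<bar> \<le> 1" and g: "\<bar>g\<bar> \<le> 1"
    and ga: "\<alpha> \<le> arccos g" and gb: "arccos g \<le> \<beta>" and "0 \<le> \<alpha>" "\<alpha> \<le> \<beta>" "\<beta> \<le> pi"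
  shows "hcl (cos \<alpha> + \<delta>) \<le> arccos f \<and> arccos f \<le> hcl (cos \<beta> - \<delta>)"
proof -
  have "g \<le> cos \<alpha>" using le_cos_of_le_arccos[OF g _ _ ga] assms by simp
  then have "f \<le> max (-1) (min 1 (cos \<alpha> + \<delta>))" using d f by (auto simp: abs_le_iff)
  then have 1: "hcl (cos \<alpha> + \<delta>) \<le> arccos f" unfolding hcl_def
    using f by (intro arccos_le_arccos) auto
  have "cos \<beta> \<le> g" using cos_le_of_arccos_le[OF g _ _ gb] assms by simp
  then have "max (-1) (min 1 (cos \<beta> - \<delta>)) \<le> f" using d f by (auto simp: abs_le_iff)
  then have 2: "arccos f \<le> hcl (cos \<beta> - \<delta>)" unfolding hcl_def
    using f by (intro arccos_le_arccos) auto
  show ?thesis using 1 2 by simp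
qed

lemma lower_pt:
  assumes d: "\<bar>g - f\<bar> \<le> \<delta>" and f: "\<bar>f\<bar> \<le> 1"
    and fa: "hcl (cos \<alpha> - \<delta>) \<le> arccos f" and fb: "arccos f \<le> hcl (cos \<beta> + \<delta>)"
    and ab: "0 \<le> \<alpha>" "\<alpha> \<le> \<beta>" "\<beta> \<le> pi" and d0: "0 \<le> \<delta>"
    and sep: "cos \<beta> + \<delta> \<le> cos \<alpha> - \<delta>"
  shows "\<bar>g\<bar> \<le> 1 \<and> \<alpha> \<le> arccos g \<and> arccos g \<le> \<beta>"
proof -
  have r1: "-1 \<le> cos \<beta>" "cos \<alpha> \<le> 1" by auto
  have rg: "-1 \<le> cos \<alpha> - \<delta>" "cos \<alpha> - \<delta> \<le> 1" "-1 \<le> cos \<beta> + \<delta>" "cos \<beta> + \<delta> \<le> 1"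
    using r1 sep d0 by linarith+
  have e1: "hcl (cos \<alpha> - \<delta>) = arccos (cos \<alpha> - \<delta>)" using rg by (intro hcl_eq)
  have e2: "hcl (cos \<beta> + \<delta>) = arccos (cos \<beta> + \<delta>)" using rg by (intro hcl_eq)
  have "f \<le> cos (arccos (cos \<alpha> - \<delta>))" using fa e1 f rg
    by (intro le_cos_of_le_arccos) (auto intro!: arccos_lbound arccos_ubound simp: abs_le_iff)
  then have f1: "f \<le> cos \<alpha> - \<delta>" using r1 sep d0 by simp
  have "cos (arccos (cos \<beta> + \<delta>)) \<le> f" using fb e2 f rg
    by (intro cos_le_of_arccos_le) (auto intro!: arccos_lbound arccos_ubound simp: abs_le_iff)
  then have f2: "cos \<beta> + \<delta> \<le> f" using r1 sep d0 by simp
  have g1: "g \<le> cos \<alpha>" "cos \<beta> \<le> g" using f1 f2 d by (auto simp: abs_le_iff)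
  have gm: "-1 \<le> g" "g \<le> 1" using g1 r1 by linarith+
  have "\<bar>g\<bar> \<le> 1" unfolding abs_le_iff using gm by linarith
  moreover have "arccos (cos \<alpha>) \<le> arccos g" using g1 gm by (intro arccos_le_arccos) auto
  moreover have "arccos g \<le> arccos (cos \<beta>)" using g1 gm by (intro arccos_le_arccos) auto
  ultimately show ?thesis using ab by (simp add: arccos_cos)
qed

definition STset :: "wmodel \<Rightarrow> real \<Rightarrow> real \<Rightarrow> nat \<Rightarrow> nat set" where
  "STset W \<alpha> \<beta> N = {p. p \<le> N \<and> good_red W p \<and>
              \<bar>real_of_int (frob_trace W p)\<bar> \<le> 2 * sqrt (real p) \<and>
              \<alpha> \<le> arccos (real_of_int (frob_trace W p) / (2 * sqrt (real p))) \<and>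
              arccos (real_of_int (frob_trace W p) / (2 * sqrt (real p))) \<le> \<beta>}"

definition PrS :: "nat \<Rightarrow> nat set" where "PrS N = {p. p \<le> N \<and> prime p}"

lemma st_lim:
  assumes "sato_tate W" "0 \<le> \<alpha>" "\<alpha> < \<beta>" "\<beta> \<le> pi"
  shows "(\<lambda>N. real (card (STset W \<alpha> \<beta> N)) / real (card (PrS N))) \<longlonglongrightarrow> 2 / pi * (Fs \<beta> - Fs \<alpha>)"
proof -
  have "(\<lambda>N. real (card (STset W \<alpha> \<beta> N)) / real (card (PrS N))) \<longlonglongrightarrow> 2 / pi * integral {\<alpha>..\<beta>} (\<lambda>\<theta>. sin \<theta> ^ 2)"
    using assms unfolding sato_tate_def STset_def PrS_def by blast
  then show ?thesis using integral_sin2[of \<alpha> \<beta>] assms by simp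
qed

lemma Fs_pi: "2 / pi * (Fs pi - Fs 0) = 1"
  unfolding Fs_def by simp

lemma isCont_hcl' [continuous_intros]: "isCont f x \<Longrightarrow> isCont (\<lambda>y. hcl (f y)) x"
  using isCont_o2[OF _ isCont_hcl] by blast

lemma close_eventually:
  assumes n: "n \<ge> 3" and d: "\<delta> > 0"
  shows "\<exists>P1::nat. \<forall>p\<ge>P1. \<bar>real_of_int (frob_trace W p)\<bar> \<le> 2 * sqrt (real p) \<longrightarrow>
     \<bar>Delta2 W n p - real_of_int (frob_trace W p) / (2 * sqrt (real p))\<bar> \<le> \<delta>"
proof -
  obtain C P where C: "C \<ge> 0" and P: "P \<ge> 16" and
    H: "\<And>p. P \<le> real p \<Longrightarrow> \<bar>real_of_int (frob_trace W p)\<bar> \<le> 2 * sqrt (real p) \<Longrightarrow>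
     \<bar>Delta2 W n p - real_of_int (frob_trace W p) / (2 * sqrt (real p))\<bar> \<le> C / sqrt (real p)"
    using delta_close[OF n, of W] by blast
  define P1 where "P1 = nat \<lceil>max P ((C / \<delta>)^2)\<rceil>"
  show ?thesis
  proof (intro exI[of _ P1] allI impI)
    fix p assume p: "P1 \<le> p" and a: "\<bar>real_of_int (frob_trace W p)\<bar> \<le> 2 * sqrt (real p)"
    have "max P ((C / \<delta>)^2) \<le> real P1" unfolding P1_def by (rule real_nat_ceiling_ge)
    also have "\<dots> \<le> real p" using p by simp
    finally have pP: "P \<le> real p" and pC: "(C / \<delta>)^2 \<le> real p" by auto
    have sp: "sqrt (real p) > 0" using pP P by simp
    have "sqrt ((C / \<delta>)^2) \<le> sqrt (real p)" using pC by (rule real_sqrt_le_mono)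
    then have "C / \<delta> \<le> sqrt (real p)" using C d by simp
    then have "C \<le> \<delta> * sqrt (real p)" using d by (simp add: field_simps)
    then have "C / sqrt (real p) \<le> \<delta>" using sp by (simp add: field_simps)
    then show "\<bar>Delta2 W n p - real_of_int (frob_trace W p) / (2 * sqrt (real p))\<bar> \<le> \<delta>"
      using H[OF pP a] by linarith
  qed
qed

lemma f_bound:
  assumes "prime p" "\<bar>real_of_int (frob_trace W p)\<bar> \<le> 2 * sqrt (real p)"
  shows "\<bar>real_of_int (frob_trace W p) / (2 * sqrt (real p))\<bar> \<le> 1"
proof -
  have "p > 0" using assms(1) prime_gt_0_nat by blast
  then have "sqrt (real p) > 0" by simp
  then show ?thesis using assms(2) by (simp add: abs_divide divide_le_eq)
qed

theorem theorem14:
  fixes W :: wmodel and n :: nat and \<alpha> \<beta> :: real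
  assumes "n \<ge> 3"
    and "wdisc W \<noteq> 0"
    and "sato_tate W"
    and "0 \<le> \<alpha>" and "\<alpha> < \<beta>" and "\<beta> \<le> pi"
  shows "(\<lambda>N. real (card {p. p \<le> N \<and> good_red W p \<and> \<bar>Delta2 W n p\<bar> \<le> 1 \<and>
              \<alpha> \<le> arccos (Delta2 W n p) \<and> arccos (Delta2 W n p) \<le> \<beta>})
           / real (card {p. p \<le> N \<and> prime p}))
         \<longlonglongrightarrow> 2 / pi * integral {\<alpha>..\<beta>} (\<lambda>\<theta>. sin \<theta> ^ 2)"
proof -
  note n = assms(1) and ST = assms(3) and ab = assms(4-6)
  define Aset where "Aset N = {p. p \<le> N \<and> good_red W p \<and> \<bar>Delta2 W n p\<bar> \<le> 1 \<and>
              \<alpha> \<le> arccos (Delta2 W n p) \<and> arccos (Delta2 W n p) \<le> \<beta>}" for N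
  define X where "X N = real (card (Aset N)) / real (card (PrS N))" for N
  define G where "G x y = 2 / pi * (Fs y - Fs x)" for x y
  define fr where "fr p = real_of_int (frob_trace W p) / (2 * sqrt (real p))" for p
  have I: "2 / pi * integral {\<alpha>..\<beta>} (\<lambda>\<theta>. sin \<theta> ^ 2) = G \<alpha> \<beta>"
    using integral_sin2[of \<alpha> \<beta>] ab by (simp add: G_def)
  have cab: "cos \<beta> < cos \<alpha>" using cos_monotone_0_pi[of \<alpha> \<beta>] ab by simp
  have hA: "hcl (cos \<alpha>) = \<alpha>" using ab by (simp add: hcl_eq arccos_cos)
  have hB: "hcl (cos \<beta>) = \<beta>" using ab by (simp add: hcl_eq arccos_cos)
  have finA: "finite (Aset N)" for N unfolding Aset_def by (rule finite_subset[of _ "{..N}"]) auto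
  have finS: "finite (STset W x y N)" for x y N unfolding STset_def by (rule finite_subset[of _ "{..N}"]) auto
  have finP: "finite (PrS N)" for N unfolding PrS_def by (rule finite_subset[of _ "{..N}"]) auto
  have S0P: "STset W 0 pi N \<subseteq> PrS N" for N unfolding STset_def PrS_def good_red_def by auto
  have Pinf: "filterlim (\<lambda>N. real (card (PrS N))) at_infinity sequentially"
    using filterlim_at_top_imp_at_infinity[OF prime_count_inf] unfolding PrS_def .
  have Ppos: "eventually (\<lambda>N. card (PrS N) > 0) sequentially"
    unfolding eventually_sequentially
  proof (intro exI[of _ 2] allI impI)
    fix N :: nat assume "2 \<le> N"
    then have "2 \<in> PrS N" unfolding PrS_def by simp
    then show "card (PrS N) > 0" using finP card_gt_0_iff by blast
  qed
  have small: "(\<lambda>N. real P1 / real (card (PrS N))) \<longlonglongrightarrow> 0" for P1 :: nat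
    by (rule tendsto_divide_0[OF tendsto_const Pinf])
  have S0lim: "(\<lambda>N. real (card (STset W 0 pi N)) / real (card (PrS N))) \<longlonglongrightarrow> 1"
    using st_lim[OF ST, of 0 pi] Fs_pi by simp

  have upper: "eventually (\<lambda>N. X N < u) sequentially" if u: "u > G \<alpha> \<beta>" for u
  proof -
    have "isCont (\<lambda>\<delta>. G (hcl (cos \<alpha> + \<delta>)) (hcl (cos \<beta> - \<delta>))) 0"
      unfolding G_def Fs_def by (intro continuous_intros) auto
    then have "((\<lambda>\<delta>. G (hcl (cos \<alpha> + \<delta>)) (hcl (cos \<beta> - \<delta>))) \<longlongrightarrow> G \<alpha> \<beta>) (at 0)"
      using hA hB by (simp add: isCont_def)
    from order_tendstoD(2)[OF this u] obtain d where d: "d > 0" and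
      dH: "\<And>x. x \<noteq> 0 \<Longrightarrow> dist x 0 < d \<Longrightarrow> G (hcl (cos \<alpha> + x)) (hcl (cos \<beta> - x)) < u"
      unfolding eventually_at by auto
    define \<delta> where "\<delta> = d / 2"
    have \<delta>: "\<delta> > 0" using d by (simp add: \<delta>_def)
    define \<alpha>1 where "\<alpha>1 = hcl (cos \<alpha> + \<delta>)"
    define \<beta>1 where "\<beta>1 = hcl (cos \<beta> - \<delta>)"
    have Gu: "G \<alpha>1 \<beta>1 < u" unfolding \<alpha>1_def \<beta>1_def using dH[of \<delta>] d by (simp add: \<delta>_def)
    have a1: "\<alpha>1 \<le> \<alpha>" unfolding \<alpha>1_def using hA hcl_anti[of "cos \<alpha>" "cos \<alpha> + \<delta>"] \<delta> by simp
    have b1: "\<beta> \<le> \<beta>1" unfolding \<beta>1_def using hB hcl_anti[of "cos \<beta> - \<delta>" "cos \<beta>"] \<delta> by simp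
    have r1: "0 \<le> \<alpha>1" "\<beta>1 \<le> pi" unfolding \<alpha>1_def \<beta>1_def by (auto intro: hcl_range)
    have S1lim: "(\<lambda>N. real (card (STset W \<alpha>1 \<beta>1 N)) / real (card (PrS N))) \<longlonglongrightarrow> G \<alpha>1 \<beta>1"
      using st_lim[OF ST, of \<alpha>1 \<beta>1] a1 b1 r1 ab by (simp add: G_def)
    obtain P1 :: nat where P1: "\<And>p. P1 \<le> p \<Longrightarrow> \<bar>real_of_int (frob_trace W p)\<bar> \<le> 2 * sqrt (real p) \<Longrightarrow>
       \<bar>Delta2 W n p - fr p\<bar> \<le> \<delta>"
      using close_eventually[OF n \<delta>, of W] unfolding fr_def by blast
    have incl: "Aset N \<subseteq> STset W \<alpha>1 \<beta>1 N \<union> (PrS N - STset W 0 pi N) \<union> {..<P1}" for N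
    proof
      fix p assume pA: "p \<in> Aset N"
      show "p \<in> STset W \<alpha>1 \<beta>1 N \<union> (PrS N - STset W 0 pi N) \<union> {..<P1}"
      proof (cases "P1 \<le> p \<and> p \<in> STset W 0 pi N")
        case True
        then have fa: "\<bar>real_of_int (frob_trace W p)\<bar> \<le> 2 * sqrt (real p)" and pr: "prime p"
          unfolding STset_def good_red_def by auto
        have fb: "\<bar>fr p\<bar> \<le> 1" using f_bound[OF pr fa] by (simp add: fr_def)
        have cl: "\<bar>Delta2 W n p - fr p\<bar> \<le> \<delta>" using P1 True fa by blast
        have "\<alpha>1 \<le> arccos (fr p) \<and> arccos (fr p) \<le> \<beta>1"
          unfolding \<alpha>1_def \<beta>1_def using pA ab
          by (intro upper_pt[OF cl fb]) (auto simp: Aset_def)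
        then have "p \<in> STset W \<alpha>1 \<beta>1 N" using pA fa unfolding STset_def Aset_def fr_def by auto
        then show ?thesis by blast
      next
        case False
        moreover have "p \<in> PrS N" using pA unfolding Aset_def PrS_def good_red_def by auto
        ultimately show ?thesis by auto
      qed
    qed
    have cardU: "real (card (Aset N)) \<le> real (card (STset W \<alpha>1 \<beta>1 N)) +
        (real (card (PrS N)) - real (card (STset W 0 pi N))) + real P1" for N
    proof -
      have "card (Aset N) \<le> card (STset W \<alpha>1 \<beta>1 N \<union> (PrS N - STset W 0 pi N) \<union> {..<P1})"
        using incl by (intro card_mono) (auto intro: finS finP)
      also have "\<dots> \<le> card (STset W \<alpha>1 \<beta>1 N) + card (PrS N - STset W 0 pi N) + card {..<P1}"
        by (meson add_le_mono card_Un_le le_refl order_trans)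
      also have "card (PrS N - STset W 0 pi N) = card (PrS N) - card (STset W 0 pi N)"
        using S0P finS by (intro card_Diff_subset)
      finally have "card (Aset N) \<le> card (STset W \<alpha>1 \<beta>1 N) + (card (PrS N) - card (STset W 0 pi N)) + P1"
        by simp
      moreover have "card (STset W 0 pi N) \<le> card (PrS N)" using S0P finP by (intro card_mono)
      ultimately show ?thesis by (simp add: of_nat_diff flip: of_nat_add)
    qed
    define U where "U N = real (card (STset W \<alpha>1 \<beta>1 N)) / real (card (PrS N)) +
        (1 - real (card (STset W 0 pi N)) / real (card (PrS N))) + real P1 / real (card (PrS N))" for N
    have "U \<longlonglongrightarrow> G \<alpha>1 \<beta>1 + (1 - 1) + 0"
      unfolding U_def by (intro tendsto_add tendsto_diff S1lim tendsto_const S0lim small)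
    then have "eventually (\<lambda>N. U N < u) sequentially" using Gu by (intro order_tendstoD(2)) auto
    then show ?thesis using Ppos
    proof (rule eventually_elim2)
      fix N assume UN: "U N < u" and pp: "card (PrS N) > 0"
      have "X N \<le> U N"
        unfolding X_def U_def using cardU[of N] pp
        by (simp add: divide_simps)
      then show "X N < u" using UN by linarith
    qed
  qed

  have lower: "eventually (\<lambda>N. l < X N) sequentially" if l: "l < G \<alpha> \<beta>" for l
  proof -
    have "isCont (\<lambda>\<delta>. G (hcl (cos \<alpha> - \<delta>)) (hcl (cos \<beta> + \<delta>))) 0"
      unfolding G_def Fs_def by (intro continuous_intros) auto
    then have "((\<lambda>\<delta>. G (hcl (cos \<alpha> - \<delta>)) (hcl (cos \<beta> + \<delta>))) \<longlongrightarrow> G \<alpha> \<beta>) (at 0)"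
      using hA hB by (simp add: isCont_def)
    from order_tendstoD(1)[OF this l] obtain d where d: "d > 0" and
      dH: "\<And>x. x \<noteq> 0 \<Longrightarrow> dist x 0 < d \<Longrightarrow> l < G (hcl (cos \<alpha> - x)) (hcl (cos \<beta> + x))"
      unfolding eventually_at by auto
    define \<delta> where "\<delta> = min (d / 2) ((cos \<alpha> - cos \<beta>) / 4)"
    have \<delta>: "\<delta> > 0" using d cab by (simp add: \<delta>_def)
    have "\<delta> \<le> (cos \<alpha> - cos \<beta>) / 4" unfolding \<delta>_def by (rule min.cobounded2)
    then have "4 * \<delta> \<le> cos \<alpha> - cos \<beta>" by simp
    then have sep: "cos \<beta> + \<delta> < cos \<alpha> - \<delta>" using cab \<delta> by linarith
    define \<alpha>2 where "\<alpha>2 = hcl (cos \<alpha> - \<delta>)"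
    define \<beta>2 where "\<beta>2 = hcl (cos \<beta> + \<delta>)"
    have "\<delta> \<le> d / 2" unfolding \<delta>_def by (rule min.cobounded1)
    then have "dist \<delta> 0 < d" using \<delta> d by simp
    then have Gl: "l < G \<alpha>2 \<beta>2" unfolding \<alpha>2_def \<beta>2_def using dH[of \<delta>] \<delta> by simp
    have rg: "-1 \<le> cos \<beta> + \<delta>" "cos \<alpha> - \<delta> \<le> 1"
      using \<delta> sep cos_ge_minus_one[of \<beta>] cos_le_one[of \<alpha>] by linarith+
    have ab2: "\<alpha>2 < \<beta>2" unfolding \<alpha>2_def \<beta>2_def using rg sep
      by (simp add: hcl_eq arccos_less_arccos)
    have r2: "0 \<le> \<alpha>2" "\<beta>2 \<le> pi" unfolding \<alpha>2_def \<beta>2_def by (auto intro: hcl_range)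
    have S2lim: "(\<lambda>N. real (card (STset W \<alpha>2 \<beta>2 N)) / real (card (PrS N))) \<longlonglongrightarrow> G \<alpha>2 \<beta>2"
      using st_lim[OF ST, of \<alpha>2 \<beta>2] ab2 r2 by (simp add: G_def)
    obtain P1 :: nat where P1: "\<And>p. P1 \<le> p \<Longrightarrow> \<bar>real_of_int (frob_trace W p)\<bar> \<le> 2 * sqrt (real p) \<Longrightarrow>
       \<bar>Delta2 W n p - fr p\<bar> \<le> \<delta>"
      using close_eventually[OF n \<delta>, of W] unfolding fr_def by blast
    have incl: "STset W \<alpha>2 \<beta>2 N \<subseteq> Aset N \<union> {..<P1}" for N
    proof
      fix p assume pS: "p \<in> STset W \<alpha>2 \<beta>2 N"
      show "p \<in> Aset N \<union> {..<P1}"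
      proof (cases "P1 \<le> p")
        case True
        have fa: "\<bar>real_of_int (frob_trace W p)\<bar> \<le> 2 * sqrt (real p)" and pr: "prime p"
          and fi: "\<alpha>2 \<le> arccos (fr p)" "arccos (fr p) \<le> \<beta>2"
          using pS unfolding STset_def good_red_def fr_def by auto
        have fb: "\<bar>fr p\<bar> \<le> 1" using f_bound[OF pr fa] by (simp add: fr_def)
        have cl: "\<bar>Delta2 W n p - fr p\<bar> \<le> \<delta>" using P1 True fa by blast
        have "\<bar>Delta2 W n p\<bar> \<le> 1 \<and> \<alpha> \<le> arccos (Delta2 W n p) \<and> arccos (Delta2 W n p) \<le> \<beta>"
          using fi ab sep \<delta> unfolding \<alpha>2_def \<beta>2_def
          by (intro lower_pt[OF cl fb]) auto
        then show ?thesis using pS unfolding STset_def Aset_def by auto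
      next
        case False
        then show ?thesis by auto
      qed
    qed
    have cardL: "real (card (STset W \<alpha>2 \<beta>2 N)) \<le> real (card (Aset N)) + real P1" for N
    proof -
      have "card (STset W \<alpha>2 \<beta>2 N) \<le> card (Aset N \<union> {..<P1})"
        using incl by (intro card_mono) (auto intro: finA)
      also have "\<dots> \<le> card (Aset N) + P1" using card_Un_le[of "Aset N" "{..<P1}"] by simp
      finally show ?thesis by (simp flip: of_nat_add)
    qed
    define V where "V N = real (card (STset W \<alpha>2 \<beta>2 N)) / real (card (PrS N)) - real P1 / real (card (PrS N))" for N
    have "V \<longlonglongrightarrow> G \<alpha>2 \<beta>2 - 0"
      unfolding V_def by (intro tendsto_diff S2lim small)
    then have "eventually (\<lambda>N. l < V N) sequentially" using Gl by (intro order_tendstoD(1)) auto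
    then show ?thesis using Ppos
    proof (rule eventually_elim2)
      fix N assume VN: "l < V N" and pp: "card (PrS N) > 0"
      have "V N \<le> X N"
        unfolding X_def V_def using cardL[of N] pp
        by (simp add: divide_simps)
      then show "l < X N" using VN by linarith
    qed
  qed
  have "X \<longlonglongrightarrow> G \<alpha> \<beta>"
    by (rule order_tendstoI) (auto intro: upper lower)
  then show ?thesis unfolding I X_def Aset_def PrS_def .
qed

end
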